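(* For all $n,m\ge2$, $C(S^1)^{(n)}\otimes_{\min}C(S^1)^{(m)}\neq C(S^1)^{(n)}\otimes_{\max}C(S^1)^{(m)}$; that is, the minimal and maximal operator system tensor products of the operator systems of $n\times n$ and $m\times m$ Toeplitz matrices have different matrix positivity cones.
   Context: $C(S^1)^{(n)}$ is the operator subsystem of $M_n(\mathbb C)$ of Toeplitz matrices $[\tau_{k-\ell}]$ with unit the identity. For operator systems $\mathcal R\subseteq B(\mathcal H)$, $\mathcal S\subseteq B(\mathcal K)$, $\mathcal R\otimes_{\min}\mathcal S$ is the algebraic tensor product with matrix order inherited from $B(\mathcal H\otimes\mathcal K)$. In $\mathcal R\otimes_{\max}\mathcal S$, $x\in M_p(\mathcal R\otimes\mathcal S)$ is positive iff for every $\varepsilon>0$ there exist $a\in M_k(\mathcal R)_+$, $b\in M_l(\mathcal S)_+$ and linear $\delta:\mathbb C^p\to\mathbb C^k\otimes\mathbb C^l$ with $\varepsilon(e_{\mathcal R}\otimes e_{\mathcal S})_p+x=\delta^*(a\otimes b)\delta$. *)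

theory Defs
  imports Complex_Main
begin

text \<open>Matrices are functions of indices; only indices in range matter.
  An n x n complex matrix is a function nat => nat => complex (indices < n).\<close>

definition toeplitz :: "nat \<Rightarrow> (nat \<Rightarrow> nat \<Rightarrow> complex) \<Rightarrow> bool" where
  "toeplitz n A \<longleftrightarrow>
     (\<forall>r r' t t'. r < n \<and> r' < n \<and> t < n \<and> t' < n \<and> int r - int r' = int t - int t'
        \<longrightarrow> A r r' = A t t')"

definition psd_on :: "'i set \<Rightarrow> ('i \<Rightarrow> 'i \<Rightarrow> complex) \<Rightarrow> bool" where
  "psd_on I M \<longleftrightarrow>
     (\<forall>v :: 'i \<Rightarrow> complex.
        Im (\<Sum>x\<in>I. \<Sum>y\<in>I. cnj (v x) * M x y * v y) = 0 \<and>
        Re (\<Sum>x\<in>I. \<Sum>y\<in>I. cnj (v x) * M x y * v y) \<ge> 0)"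

text \<open>M_k(C(S^1)^(n)): k x k block matrices a i j (i,j < k) whose blocks a i j are
  n x n Toeplitz matrices (entries a i j r r').\<close>
definition in_Mk_toep :: "nat \<Rightarrow> nat \<Rightarrow> (nat \<Rightarrow> nat \<Rightarrow> nat \<Rightarrow> nat \<Rightarrow> complex) \<Rightarrow> bool" where
  "in_Mk_toep n k a \<longleftrightarrow> (\<forall>i<k. \<forall>j<k. toeplitz n (a i j))"

definition pos_Mk_toep :: "nat \<Rightarrow> nat \<Rightarrow> (nat \<Rightarrow> nat \<Rightarrow> nat \<Rightarrow> nat \<Rightarrow> complex) \<Rightarrow> bool" where
  "pos_Mk_toep n k a \<longleftrightarrow> in_Mk_toep n k a \<and>
     psd_on ({..<k} \<times> {..<n}) (\<lambda>(i, r) (j, r'). a i j r r')"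

text \<open>Algebraic tensor product C(S^1)^(n) \<otimes> C(S^1)^(m), realised inside
  M_n \<otimes> M_m = matrices indexed by pairs (r,s), r < n, s < m:
  finite sums of elementary tensors A \<otimes> B with A, B Toeplitz.\<close>
definition in_toep_tensor :: "nat \<Rightarrow> nat \<Rightarrow> (nat \<times> nat \<Rightarrow> nat \<times> nat \<Rightarrow> complex) \<Rightarrow> bool" where
  "in_toep_tensor n m Y \<longleftrightarrow>
     (\<exists>(N::nat) (A :: nat \<Rightarrow> nat \<Rightarrow> nat \<Rightarrow> complex) (B :: nat \<Rightarrow> nat \<Rightarrow> nat \<Rightarrow> complex).
        (\<forall>q<N. toeplitz n (A q) \<and> toeplitz m (B q)) \<and>
        (\<forall>r<n. \<forall>r'<n. \<forall>s<m. \<forall>s'<m.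
            Y (r, s) (r', s') = (\<Sum>q<N. A q r r' * B q s s')))"

definition in_Mp_tensor ::
  "nat \<Rightarrow> nat \<Rightarrow> nat \<Rightarrow> (nat \<Rightarrow> nat \<Rightarrow> nat \<times> nat \<Rightarrow> nat \<times> nat \<Rightarrow> complex) \<Rightarrow> bool" where
  "in_Mp_tensor n m p X \<longleftrightarrow> (\<forall>i<p. \<forall>j<p. in_toep_tensor n m (X i j))"

text \<open>Min tensor positivity: positivity as an operator on C^p \<otimes> C^n \<otimes> C^m.\<close>
definition min_pos ::
  "nat \<Rightarrow> nat \<Rightarrow> nat \<Rightarrow> (nat \<Rightarrow> nat \<Rightarrow> nat \<times> nat \<Rightarrow> nat \<times> nat \<Rightarrow> complex) \<Rightarrow> bool" where
  "min_pos n m p X \<longleftrightarrow>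
     psd_on ({..<p} \<times> {..<n} \<times> {..<m}) (\<lambda>(i, r, s) (j, r', s'). X i j (r, s) (r', s'))"

text \<open>Max tensor positivity: for every \<epsilon> > 0 there are a \<in> M_k(T_n)_+, b \<in> M_l(T_m)_+
  and a linear map \<delta> : C^p \<rightarrow> C^k \<otimes> C^l (a (k l) x p matrix \<delta> (i1,j1) i) with
  \<epsilon> (I_n \<otimes> I_m)_p + X = \<delta>^* (a \<otimes> b) \<delta>.\<close>
definition max_pos ::
  "nat \<Rightarrow> nat \<Rightarrow> nat \<Rightarrow> (nat \<Rightarrow> nat \<Rightarrow> nat \<times> nat \<Rightarrow> nat \<times> nat \<Rightarrow> complex) \<Rightarrow> bool" where
  "max_pos n m p X \<longleftrightarrow>
     (\<forall>\<epsilon>::real. \<epsilon> > 0 \<longrightarrow>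
       (\<exists>(k::nat) (l::nat) a b (\<delta> :: nat \<times> nat \<Rightarrow> nat \<Rightarrow> complex).
          k \<ge> 1 \<and> l \<ge> 1 \<and> pos_Mk_toep n k a \<and> pos_Mk_toep m l b \<and>
          (\<forall>i<p. \<forall>j<p. \<forall>r<n. \<forall>r'<n. \<forall>s<m. \<forall>s'<m.
             complex_of_real \<epsilon> * (if i = j \<and> r = r' \<and> s = s' then 1 else 0) + X i j (r, s) (r', s')
             = (\<Sum>i1<k. \<Sum>j1<l. \<Sum>i2<k. \<Sum>j2<l.
                  cnj (\<delta> (i1, j1) i) * (a i1 i2 r r' * b j1 j2 s s') * \<delta> (i2, j2) j))))"

end

theory Submission
  imports Defs "HOL-Library.Complex_Order" "Jordan_Normal_Form.Determinant"
begin


definition qf :: "'i set \<Rightarrow> ('i \<Rightarrow> 'i \<Rightarrow> complex) \<Rightarrow> ('i \<Rightarrow> complex) \<Rightarrow> complex" where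
  "qf I M v = (\<Sum>x\<in>I. \<Sum>y\<in>I. cnj (v x) * M x y * v y)"

lemma psd_iff: "psd_on I M \<longleftrightarrow> (\<forall>v. 0 \<le> qf I M v)"
  unfolding psd_on_def qf_def less_eq_complex_def by auto

lemma cnj_mult_self_nonneg: "0 \<le> cnj z * (z::complex)"
  by (simp add: less_eq_complex_def)

lemma sum4_swap: "(\<Sum>a\<in>A. \<Sum>b\<in>B. \<Sum>c\<in>C. \<Sum>d\<in>D. f a b c d) = (\<Sum>c\<in>C. \<Sum>d\<in>D. \<Sum>a\<in>A. \<Sum>b\<in>B. f a b c d)"
proof -
  have "(\<Sum>a\<in>A. \<Sum>b\<in>B. \<Sum>c\<in>C. \<Sum>d\<in>D. f a b c d) = (\<Sum>a\<in>A. \<Sum>c\<in>C. \<Sum>b\<in>B. \<Sum>d\<in>D. f a b c d)"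
    by (rule sum.cong[OF refl], rule sum.swap)
  also have "\<dots> = (\<Sum>c\<in>C. \<Sum>a\<in>A. \<Sum>b\<in>B. \<Sum>d\<in>D. f a b c d)" by (rule sum.swap)
  also have "\<dots> = (\<Sum>c\<in>C. \<Sum>a\<in>A. \<Sum>d\<in>D. \<Sum>b\<in>B. f a b c d)"
    by (rule sum.cong[OF refl], rule sum.cong[OF refl], rule sum.swap)
  also have "\<dots> = (\<Sum>c\<in>C. \<Sum>d\<in>D. \<Sum>a\<in>A. \<Sum>b\<in>B. f a b c d)"
    by (rule sum.cong[OF refl], rule sum.swap)
  finally show ?thesis .
qed

lemma sum_prod_mid: "(\<Sum>x\<in>A. f x) * (c::complex) * (\<Sum>y\<in>B. g y) = (\<Sum>x\<in>A. \<Sum>y\<in>B. f x * c * g y)"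
  by (simp add: sum_distrib_left sum_distrib_right mult_ac)

lemma psd_gram:
  assumes "finite T"
  shows "psd_on I (\<lambda>x y. \<Sum>t\<in>T. cnj (g t x) * g t y)"
proof -
  have eq: "qf I (\<lambda>x y. \<Sum>t\<in>T. cnj (g t x) * g t y) v =
        (\<Sum>t\<in>T. cnj (\<Sum>x\<in>I. g t x * v x) * (\<Sum>y\<in>I. g t y * v y))" for v
    unfolding qf_def
    by (simp add: sum_distrib_left sum_distrib_right sum.swap[of _ T] mult_ac)
  show ?thesis unfolding psd_iff
  proof
    fix v show "0 \<le> qf I (\<lambda>x y. \<Sum>t\<in>T. cnj (g t x) * g t y) v"
      unfolding eq by (intro sum_nonneg cnj_mult_self_nonneg)
  qed
qed

lemma qf_congr:
  "qf I (\<lambda>x y. \<Sum>j\<in>J. \<Sum>j'\<in>J. cnj (K j x) * M j j' * K j' y) v = qf J M (\<lambda>j. \<Sum>x\<in>I. K j x * v x)"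
proof -
  have "qf J M (\<lambda>j. \<Sum>x\<in>I. K j x * v x) = (\<Sum>j\<in>J. \<Sum>j'\<in>J. (\<Sum>x\<in>I. cnj (K j x * v x)) * M j j' * (\<Sum>y\<in>I. K j' y * v y))"
    unfolding qf_def by simp
  also have "\<dots> = (\<Sum>j\<in>J. \<Sum>j'\<in>J. \<Sum>x\<in>I. \<Sum>y\<in>I. cnj (K j x * v x) * M j j' * (K j' y * v y))"
    by (simp only: sum_prod_mid)
  also have "\<dots> = (\<Sum>x\<in>I. \<Sum>y\<in>I. \<Sum>j\<in>J. \<Sum>j'\<in>J. cnj (K j x * v x) * M j j' * (K j' y * v y))"
    by (rule sum4_swap)
  also have "\<dots> = qf I (\<lambda>x y. \<Sum>j\<in>J. \<Sum>j'\<in>J. cnj (K j x) * M j j' * K j' y) v"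
    unfolding qf_def by (simp add: sum_distrib_left sum_distrib_right mult_ac)
  finally show ?thesis by simp
qed

lemma psd_congr:
  assumes "psd_on J M"
  shows "psd_on I (\<lambda>x y. \<Sum>j\<in>J. \<Sum>j'\<in>J. cnj (K j x) * M j j' * K j' y)"
  using assms unfolding psd_iff qf_congr by simp

lemma psd_add: "psd_on I A \<Longrightarrow> psd_on I B \<Longrightarrow> psd_on I (\<lambda>x y. A x y + B x y)"
  unfolding psd_iff qf_def by (simp add: distrib_left distrib_right sum.distrib add_nonneg_nonneg)


lemma sum_if2:
  assumes "finite I" "x \<in> I" "y \<in> I" "x \<noteq> y"
  shows "(\<Sum>z\<in>I. (if z = x then a else if z = y then b else 0) * h z) = a * h x + b * (h y::complex)"
proof -
  have "(\<Sum>z\<in>I. (if z = x then a else if z = y then b else 0) * h z) =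
        (\<Sum>z\<in>I. (if z = x then a * h z else 0) + (if z = y then b * h z else 0))"
    using assms(4) by (intro sum.cong) auto
  also have "\<dots> = a * h x + b * h y" using assms by (simp add: sum.distrib)
  finally show ?thesis .
qed

lemma sum_if2':
  assumes "finite I" "x \<in> I" "y \<in> I" "x \<noteq> y"
  shows "(\<Sum>z\<in>I. h z * (if z = x then a else if z = y then b else 0)) = h x * a + h y * (b::complex)"
  using sum_if2[OF assms, of a b h] by (simp add: mult.commute)

lemma qf_two:
  assumes "finite I" "x \<in> I" "y \<in> I" "x \<noteq> y"
  shows "qf I M (\<lambda>z. if z = x then a else if z = y then b else 0) =
    cnj a * M x x * a + cnj a * M x y * b + cnj b * M y x * a + cnj b * M y y * b"
proof -
  let ?v = "\<lambda>z. if z = x then a else if z = y then b else 0"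
  have c: "cnj (?v z) = (if z = x then cnj a else if z = y then cnj b else 0)" for z
    by auto
  have "qf I M ?v = (\<Sum>z\<in>I. \<Sum>w\<in>I. (cnj (?v z) * M z w) * ?v w)"
    unfolding qf_def by simp
  also have "\<dots> = (\<Sum>z\<in>I. cnj (?v z) * M z x * a + cnj (?v z) * M z y * b)"
    by (rule sum.cong[OF refl], rule sum_if2'[OF assms])
  also have "\<dots> = (\<Sum>z\<in>I. (if z = x then cnj a else if z = y then cnj b else 0) * (M z x * a + M z y * b))"
    unfolding c by (rule sum.cong[OF refl]) (simp add: algebra_simps)
  also have "\<dots> = cnj a * (M x x * a + M x y * b) + cnj b * (M y x * a + M y y * b)"
    by (rule sum_if2[OF assms])
  finally show ?thesis by (simp add: algebra_simps)
qed

lemma qf_one: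
  assumes "finite I" "x \<in> I"
  shows "qf I M (\<lambda>z. if z = x then a else 0) = cnj a * M x x * a"
proof -
  have c: "cnj (if z = x then a else 0) = (if z = x then cnj a else 0)" for z by auto
  show ?thesis unfolding qf_def c using assms
    by (simp add: if_distrib[of "\<lambda>u. u * _"] if_distrib[of "\<lambda>u. _ * u"] cong: if_cong)
qed

lemma psd_diag:
  assumes "psd_on I M" "finite I" "x \<in> I"
  shows "0 \<le> M x x"
proof -
  have "0 \<le> qf I M (\<lambda>z. if z = x then 1 else 0)"
    using assms(1) unfolding psd_iff by blast
  thus ?thesis unfolding qf_one[OF assms(2,3)] by simp
qed

lemma psd_herm:
  assumes "psd_on I M" "finite I" "x \<in> I" "y \<in> I"
  shows "M y x = cnj (M x y)"
proof (cases "x = y")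
  case True
  then show ?thesis using psd_diag[OF assms(1-3)]
    by (simp add: less_eq_complex_def complex_eq_iff)
next
  case False
  have dx: "Im (M x x) = 0" and dy: "Im (M y y) = 0"
    using psd_diag[OF assms(1-3)] psd_diag[OF assms(1,2,4)] by (auto simp: less_eq_complex_def)
  have "0 \<le> qf I M (\<lambda>z. if z = x then 1 else if z = y then 1 else 0)"
    using assms(1) unfolding psd_iff by blast
  hence 1: "Im (M x y) + Im (M y x) = 0"
    using dx dy unfolding qf_two[OF assms(2-4) False] by (simp add: less_eq_complex_def)
  have "0 \<le> qf I M (\<lambda>z. if z = x then 1 else if z = y then \<i> else 0)"
    using assms(1) unfolding psd_iff by blast
  hence 2: "Re (M x y) - Re (M y x) = 0"
    using dx dy unfolding qf_two[OF assms(2-4) False] by (simp add: less_eq_complex_def)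
  show ?thesis using 1 2 by (simp add: complex_eq_iff)
qed


lemma qf_shift:
  assumes "finite I"
  shows "qf I (\<lambda>x y. M x y - c * (if x = y then 1 else 0)) v = qf I M v - c * (\<Sum>x\<in>I. cnj (v x) * v x)"
proof -
  have "qf I (\<lambda>x y. M x y - c * (if x = y then 1 else 0)) v =
        (\<Sum>x\<in>I. (\<Sum>y\<in>I. cnj (v x) * M x y * v y) - (\<Sum>y\<in>I. if y = x then c * cnj (v x) * v x else 0))"
    unfolding qf_def by (rule sum.cong[OF refl]) (auto simp: sum_subtractf[symmetric] algebra_simps intro!: sum.cong)
  also have "\<dots> = qf I M v - c * (\<Sum>x\<in>I. cnj (v x) * v x)"
    using assms by (simp add: sum_subtractf qf_def sum_distrib_left mult_ac)
  finally show ?thesis .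
qed

lemma qf_insert:
  assumes "finite I" "x \<notin> I"
  shows "qf (insert x I) M v = cnj (v x) * M x x * v x + cnj (v x) * (\<Sum>y\<in>I. M x y * v y)
     + (\<Sum>y\<in>I. cnj (v y) * M y x) * v x + qf I M v"
  using assms unfolding qf_def
  by (simp add: sum.distrib sum_distrib_left sum_distrib_right algebra_simps)

definition pdm :: "real \<Rightarrow> 'i set \<Rightarrow> ('i \<Rightarrow> 'i \<Rightarrow> complex) \<Rightarrow> bool" where
  "pdm \<eta> I M \<longleftrightarrow> psd_on I (\<lambda>x y. M x y - of_real \<eta> * (if x = y then 1 else 0))"

lemma pdm_psd:
  assumes "pdm \<eta> I M" "0 \<le> \<eta>" "finite I"
  shows "psd_on I M"
  unfolding psd_iff
proof
  fix v
  have "0 \<le> qf I (\<lambda>x y. M x y - of_real \<eta> * (if x = y then 1 else 0)) v"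
    using assms(1) unfolding pdm_def psd_iff by blast
  moreover have "0 \<le> of_real \<eta> * (\<Sum>x\<in>I. cnj (v x) * v x)"
    using assms(2) by (intro mult_nonneg_nonneg sum_nonneg cnj_mult_self_nonneg) (simp add: less_eq_complex_def)
  ultimately show "0 \<le> qf I M v" unfolding qf_shift[OF assms(3)] by (metis diff_add_cancel add_nonneg_nonneg)
qed


lemma alg_C:
  fixes w q :: complex and \<alpha> \<eta> :: real
  assumes "\<alpha> > 0"
  shows "cnj (- w / of_real \<alpha>) * (of_real \<alpha> - of_real \<eta>) * (- w / of_real \<alpha>) + cnj (- w / of_real \<alpha>) * w + cnj w * (- w / of_real \<alpha>) + q + of_real \<eta> * (cnj (- w / of_real \<alpha>) * (- w / of_real \<alpha>))
       = q - cnj w * w / of_real \<alpha>"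
proof -
  have a: "(of_real \<alpha> :: complex) \<noteq> 0" using assms by simp
  show ?thesis using a by (simp add: field_simps)
qed

lemma gram_pd:
  assumes "finite I" "0 < \<eta>" "pdm \<eta> I M"
  shows "\<exists>g. \<forall>x\<in>I. \<forall>y\<in>I. M x y = (\<Sum>t\<in>I. cnj (g t x) * g t y)"
  using assms(1,3)
proof (induction I arbitrary: M rule: finite_induct)
  case empty thus ?case by simp
next
  case (insert x I)
  let ?N = "\<lambda>u w. M u w - of_real \<eta> * (if u = w then 1 else 0)"
  have fin: "finite (insert x I)" using insert.hyps by simp
  have Npsd: "psd_on (insert x I) ?N" using insert.prems unfolding pdm_def .
  have herm: "M y x = cnj (M x y)" if "y \<in> insert x I" for y
    using psd_herm[OF Npsd fin _ that, of x] by (auto split: if_splits)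
  have herm': "M y x = cnj (M x y)" if "y \<in> I" for y using herm that by simp
  have "0 \<le> ?N x x" using psd_diag[OF Npsd fin] by simp
  hence ImM: "Im (M x x) = 0" and ReM: "Re (M x x) \<ge> \<eta>" by (auto simp: less_eq_complex_def)
  define \<alpha> where "\<alpha> = Re (M x x)"
  have Mxx: "M x x = of_real \<alpha>" using ImM unfolding \<alpha>_def by (simp add: complex_eq_iff)
  have \<alpha>pos: "\<alpha> > 0" using ReM assms(2) unfolding \<alpha>_def by simp
  define M' where "M' = (\<lambda>u w. M u w - cnj (M x u) * M x w / of_real \<alpha>)"
  have "pdm \<eta> I M'"
    unfolding pdm_def psd_iff
  proof
    fix v
    define w where "w = (\<Sum>y\<in>I. M x y * v y)"
    define s where "s = - w / of_real \<alpha>"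
    define v' where "v' = v(x := s)"
    have v'I: "v' y = v y" if "y \<in> I" for y using that insert.hyps unfolding v'_def by auto
    have v'x: "v' x = s" unfolding v'_def by simp
    have s1: "(\<Sum>y\<in>I. ?N x y * v' y) = w"
      unfolding w_def using insert.hyps by (intro sum.cong) (auto simp: v'I)
    have s2: "(\<Sum>y\<in>I. cnj (v' y) * ?N y x) = cnj w"
      unfolding w_def using insert.hyps by (auto simp: v'I herm' intro!: sum.cong)
    have s3: "qf I ?N v' = qf I ?N v"
      unfolding qf_def by (intro sum.cong) (auto simp: v'I)
    have "0 \<le> qf (insert x I) ?N v'" using Npsd unfolding psd_iff by blast
    also have "qf (insert x I) ?N v' = cnj s * (of_real \<alpha> - of_real \<eta>) * s + cnj s * w + cnj w * s + qf I ?N v"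
      unfolding qf_insert[OF insert.hyps] s1 s2 s3 v'x Mxx by simp
    finally have A: "0 \<le> cnj s * (of_real \<alpha> - of_real \<eta>) * s + cnj s * w + cnj w * s + qf I ?N v" .
    have B: "qf I (\<lambda>u w. M' u w - of_real \<eta> * (if u = w then 1 else 0)) v = qf I ?N v - cnj w * w / of_real \<alpha>"
    proof -
      have "qf I (\<lambda>u w. M' u w - of_real \<eta> * (if u = w then 1 else 0)) v =
            qf I ?N v - (\<Sum>u\<in>I. \<Sum>y\<in>I. cnj (v u) * (cnj (M x u) * M x y / of_real \<alpha>) * v y)"
        unfolding qf_def M'_def by (simp add: sum_subtractf[symmetric] algebra_simps)
      also have "(\<Sum>u\<in>I. \<Sum>y\<in>I. cnj (v u) * (cnj (M x u) * M x y / of_real \<alpha>) * v y) = cnj w * w / of_real \<alpha>"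
        unfolding w_def by (simp add: sum_distrib_left sum_distrib_right sum_divide_distrib algebra_simps)
      finally show ?thesis .
    qed
    have C: "cnj s * (of_real \<alpha> - of_real \<eta>) * s + cnj s * w + cnj w * s + qf I ?N v + of_real \<eta> * (cnj s * s)
       = qf I ?N v - cnj w * w / of_real \<alpha>"
      unfolding s_def by (rule alg_C[OF \<alpha>pos])
    have D: "0 \<le> of_real \<eta> * (cnj s * s)"
      using assms(2) by (intro mult_nonneg_nonneg cnj_mult_self_nonneg) (simp add: less_eq_complex_def)
    show "0 \<le> qf I (\<lambda>u w. M' u w - of_real \<eta> * (if u = w then 1 else 0)) v"
      unfolding B C[symmetric] using A D by (rule add_nonneg_nonneg)
  qed
  then obtain g' where g': "\<forall>u\<in>I. \<forall>w\<in>I. M' u w = (\<Sum>t\<in>I. cnj (g' t u) * g' t w)"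
    using insert.IH by blast
  define g where "g = (\<lambda>t u. if t = x then M x u / of_real (sqrt \<alpha>) else if u = x then 0 else g' t u)"
  have ss: "of_real (sqrt \<alpha>) * of_real (sqrt \<alpha>) = (of_real \<alpha> :: complex)"
  proof -
    have "sqrt \<alpha> * sqrt \<alpha> = \<alpha>" using \<alpha>pos by simp
    thus ?thesis by (metis of_real_mult)
  qed
  have gx: "cnj (g x u) * g x w = cnj (M x u) * M x w / of_real \<alpha>" for u w
  proof -
    have "cnj (g x u) * g x w = cnj (M x u) * M x w / (of_real (sqrt \<alpha>) * of_real (sqrt \<alpha>))"
      unfolding g_def by simp
    thus ?thesis unfolding ss .
  qed
  have "M u w = (\<Sum>t\<in>insert x I. cnj (g t u) * g t w)" if u: "u \<in> insert x I" and w: "w \<in> insert x I" for u w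
  proof -
    have "(\<Sum>t\<in>insert x I. cnj (g t u) * g t w) = cnj (M x u) * M x w / of_real \<alpha> + (\<Sum>t\<in>I. cnj (g t u) * g t w)"
      unfolding sum.insert[OF insert.hyps] gx ..
    also have "(\<Sum>t\<in>I. cnj (g t u) * g t w) = (if u = x \<or> w = x then 0 else M' u w)"
      proof (cases "u = x \<or> w = x")
      case True
      then show ?thesis using insert.hyps unfolding g_def by (auto intro!: sum.neutral)
    next
      case False
      then have "(\<Sum>t\<in>I. cnj (g t u) * g t w) = (\<Sum>t\<in>I. cnj (g' t u) * g' t w)"
        using insert.hyps unfolding g_def by (intro sum.cong) auto
      then show ?thesis using g' u w False by auto
    qed
    finally have e: "(\<Sum>t\<in>insert x I. cnj (g t u) * g t w) = cnj (M x u) * M x w / of_real \<alpha> + (if u = x \<or> w = x then 0 else M' u w)" .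
    show ?thesis
    proof (cases "u = x")
      case True
      then show ?thesis unfolding e using \<alpha>pos by (simp add: Mxx)
    next
      case False
      show ?thesis
      proof (cases "w = x")
        case True
        then show ?thesis unfolding e using \<alpha>pos False herm'[of u] u by (simp add: Mxx)
      next
        case False2: False
        then show ?thesis unfolding e M'_def using False by simp
      qed
    qed
  qed
  thus ?case by blast
qed


lemma psd_cong: "psd_on I N \<Longrightarrow> (\<And>x y. x \<in> I \<Longrightarrow> y \<in> I \<Longrightarrow> N x y = N' x y) \<Longrightarrow> psd_on I N'"
  unfolding psd_iff qf_def by (metis (no_types, lifting) sum.cong)

lemma if10_mult: "(if P then 1 else 0) * (X::complex) = (if P then X else 0)" by simp
lemma mult_if10: "(X::complex) * (if P then 1 else 0) = (if P then X else 0)" by simp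

lemma psd_restrict:
  assumes "psd_on J M" "finite J" "\<And>x. x \<in> I \<Longrightarrow> f x \<in> J"
  shows "psd_on I (\<lambda>x y. M (f x) (f y))"
proof (rule psd_cong[OF psd_congr[OF assms(1), of I "\<lambda>j x. if j = f x then 1 else 0"]])
  fix x y assume "x \<in> I" "y \<in> I"
  thus "(\<Sum>j\<in>J. \<Sum>j'\<in>J. cnj (if j = f x then 1 else 0) * M j j' * (if j' = f y then 1 else 0)) = M (f x) (f y)"
    using assms(2,3) by (simp add: if_distrib[of cnj] if10_mult mult_if10 cong: if_cong)
qed

lemma pdm_restrict:
  assumes "pdm \<eta> J M" "finite J" "\<And>x. x \<in> I \<Longrightarrow> f x \<in> J" "inj_on f I"
  shows "pdm \<eta> I (\<lambda>x y. M (f x) (f y))"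
  unfolding pdm_def
proof (rule psd_cong[OF psd_restrict[OF assms(1)[unfolded pdm_def] assms(2,3)]])
  fix x y assume "x \<in> I" "y \<in> I"
  thus "M (f x) (f y) - of_real \<eta> * (if f x = f y then 1 else 0) = M (f x) (f y) - of_real \<eta> * (if x = y then 1 else 0)"
    using assms(4) by (auto dest: inj_onD)
qed

lemma sum_times2: "(\<Sum>s\<in>A \<times> {..<2::nat}. F s) = (\<Sum>t\<in>A. F (t,0) + F (t,1))"
proof -
  have "(\<Sum>s\<in>A \<times> {..<2::nat}. F s) = (\<Sum>t\<in>A. \<Sum>f<2::nat. F (t,f))"
    by (simp add: sum.cartesian_product)
  also have "\<dots> = (\<Sum>t\<in>A. F (t,0) + F (t,1))"
    by (simp add: numeral_2_eq_2)
  finally show ?thesis .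
qed

lemma swap_lin: "(\<Sum>t\<in>T. f t * (\<Sum>m\<in>M. h t m * c m)) = (\<Sum>m\<in>M. (\<Sum>t\<in>T. f t * h t m) * (c m :: complex))"
proof -
  have "(\<Sum>t\<in>T. f t * (\<Sum>m\<in>M. h t m * c m)) = (\<Sum>t\<in>T. \<Sum>m\<in>M. f t * h t m * c m)"
    by (simp add: sum_distrib_left mult_ac)
  also have "\<dots> = (\<Sum>m\<in>M. \<Sum>t\<in>T. f t * h t m * c m)" by (rule sum.swap)
  also have "\<dots> = (\<Sum>m\<in>M. (\<Sum>t\<in>T. f t * h t m) * c m)" by (simp add: sum_distrib_right)
  finally show ?thesis .
qed

lemma swap_lin': "(\<Sum>t\<in>T. cnj (\<Sum>m\<in>M. h t m * c m) * f t) = (\<Sum>m\<in>M. cnj (c m) * (\<Sum>t\<in>T. cnj (h t m) * (f t :: complex)))"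
proof -
  have "(\<Sum>t\<in>T. cnj (\<Sum>m\<in>M. h t m * c m) * f t) = (\<Sum>t\<in>T. \<Sum>m\<in>M. cnj (c m) * (cnj (h t m) * f t))"
    by (simp add: sum_distrib_right sum_distrib_left mult_ac)
  also have "\<dots> = (\<Sum>m\<in>M. \<Sum>t\<in>T. cnj (c m) * (cnj (h t m) * f t))" by (rule sum.swap)
  also have "\<dots> = (\<Sum>m\<in>M. cnj (c m) * (\<Sum>t\<in>T. cnj (h t m) * f t))" by (simp add: sum_distrib_left)
  finally show ?thesis .
qed

lemma swap_bil: "(\<Sum>t\<in>T. cnj (\<Sum>m\<in>M. h t m * c m) * (\<Sum>m'\<in>M. h' t m' * d m')) =
   (\<Sum>m\<in>M. cnj (c m) * (\<Sum>m'\<in>M. (\<Sum>t\<in>T. cnj (h t m) * h' t m') * (d m' :: complex)))"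
  unfolding swap_lin' swap_lin ..




lemma pdm_inj:
  fixes k :: nat
  assumes "pdm \<eta> {..<k} A" "0 < \<eta>" "\<forall>i<k. (\<Sum>j<k. A i j * v j) = 0"
  shows "\<forall>i<k. v i = 0"
proof -
  have "0 \<le> qf {..<k} (\<lambda>x y. A x y - of_real \<eta> * (if x = y then 1 else 0)) v"
    using assms(1) unfolding pdm_def psd_iff by blast
  moreover have "qf {..<k} A v = 0"
    unfolding qf_def using assms(3) by (simp add: mult.assoc sum_distrib_left[symmetric])
  ultimately have "0 \<le> - of_real \<eta> * (\<Sum>x<k. cnj (v x) * v x)"
    unfolding qf_shift[OF finite_lessThan] by simp
  hence "Re (of_real \<eta> * (\<Sum>x<k. cnj (v x) * v x)) \<le> 0" by (simp add: less_eq_complex_def)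
  hence "\<eta> * (\<Sum>x<k. (cmod (v x))\<^sup>2) \<le> 0"
    by (simp add: complex_mult_cnj cmod_def Re_sum power2_eq_square)
  hence "(\<Sum>x<k. (cmod (v x))\<^sup>2) \<le> 0" using assms(2) by (simp add: mult_le_0_iff)
  hence "\<forall>x\<in>{..<k}. (cmod (v x))\<^sup>2 = 0"
  proof -
    assume h: "(\<Sum>x<k. (cmod (v x))\<^sup>2) \<le> 0"
    have "(\<Sum>x<k. (cmod (v x))\<^sup>2) = 0" using h by (intro antisym sum_nonneg) auto
    thus ?thesis by (subst (asm) sum_nonneg_eq_0_iff) auto
  qed
  thus ?thesis by auto
qed

lemma pdm_solve:
  fixes k :: nat
  assumes "pdm \<eta> {..<k} A" "0 < \<eta>"
  shows "\<exists>c. \<forall>i<k. \<forall>j<k. (\<Sum>t<k. A i t * c t j) = B i j"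
proof -
  define A' where "A' = mat k k (\<lambda>(i,j). A i j)"
  have A': "A' \<in> carrier_mat k k" unfolding A'_def by simp
  have "det A' \<noteq> 0"
  proof
    assume "det A' = 0"
    then obtain v where v: "v \<in> carrier_vec k" "v \<noteq> 0\<^sub>v k" "A' *\<^sub>v v = 0\<^sub>v k"
      using det_0_iff_vec_prod_zero_field[OF A'] by blast
    have "\<forall>i<k. (\<Sum>j<k. A i j * v $ j) = 0"
    proof (intro allI impI)
      fix i assume i: "i < k"
      have "(A' *\<^sub>v v) $ i = 0" using v(3) i by simp
      thus "(\<Sum>j<k. A i j * v $ j) = 0"
        using i v(1) unfolding A'_def by (simp add: scalar_prod_def lessThan_atLeast0)
    qed
    hence "\<forall>i<k. v $ i = 0" using pdm_inj[OF assms] by blast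
    hence "v = 0\<^sub>v k" using v(1) by (intro eq_vecI) auto
    thus False using v(2) by simp
  qed
  from det_non_zero_imp_unit[OF A' this, of "()"]
  obtain P where P: "P \<in> carrier_mat k k" "A' * P = 1\<^sub>m k"
    unfolding Units_def ring_mat_def by auto
  define B' where "B' = mat k k (\<lambda>(i,j). B i j)"
  have B': "B' \<in> carrier_mat k k" unfolding B'_def by simp
  define C where "C = P * B'"
  have "A' * C = B'" unfolding C_def using A' P B'
    by (metis assoc_mult_mat left_mult_one_mat)
  show ?thesis
  proof (intro exI[of _ "\<lambda>t j. C $$ (t,j)"] allI impI)
    fix i j assume i: "i < k" and j: "j < k"
    have C: "C \<in> carrier_mat k k" unfolding C_def using P B' by simp
    have "(A' * C) $$ (i,j) = B i j" using \<open>A' * C = B'\<close> i j unfolding B'_def by simp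
    thus "(\<Sum>t<k. A i t * C $$ (t, j)) = B i j"
      using i j C unfolding A'_def by (simp add: scalar_prod_def lessThan_atLeast0)
  qed
qed


lemma toep_ext:
  fixes k :: nat and a :: "nat \<Rightarrow> nat \<Rightarrow> nat \<Rightarrow> nat \<Rightarrow> complex"
  assumes pd: "pdm \<eta> ({..<k} \<times> {..<2}) (\<lambda>(i,\<rho>) (j,\<rho>'). a i j \<rho> \<rho>')" and \<eta>: "0 < \<eta>"
    and T: "\<forall>i<k. \<forall>j<k. a i j 1 1 = a i j 0 0"
  shows "\<exists>G :: ((nat \<times> nat) \<times> nat) \<Rightarrow> (nat \<times> nat) \<Rightarrow> complex.
     (\<forall>i<k. \<forall>j<k. \<forall>\<rho><2. \<forall>\<rho>'<2. (\<Sum>s\<in>({..<k} \<times> {..<2}) \<times> {..<2}. cnj (G s (i,\<rho>)) * G s (j,\<rho>')) = a i j \<rho> \<rho>') \<and>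
     (\<forall>i<k. \<forall>j<k. (\<Sum>s\<in>({..<k} \<times> {..<2}) \<times> {..<2}. cnj (G s (i,1)) * G s (j,2)) = a i j 0 1) \<and>
     (\<forall>i<k. \<forall>j<k. (\<Sum>s\<in>({..<k} \<times> {..<2}) \<times> {..<2}. cnj (G s (i,2)) * G s (j,2)) = a i j 0 0)"
proof -
  let ?I = "{..<k} \<times> {..<2::nat}"
  have finI: "finite ?I" by simp
  obtain g where g: "\<forall>x\<in>?I. \<forall>y\<in>?I. (\<lambda>(i,\<rho>) (j,\<rho>'). a i j \<rho> \<rho>') x y = (\<Sum>t\<in>?I. cnj (g t x) * g t y)"
    using gram_pd[OF finI \<eta> pd] by blast
  have ga: "a i j \<rho> \<rho>' = (\<Sum>t\<in>?I. cnj (g t (i,\<rho>)) * g t (j,\<rho>'))" if "i < k" "j < k" "\<rho> < 2" "\<rho>' < 2" for i j \<rho> \<rho>'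
    using g that by fastforce
  have herm: "a j i \<rho>' \<rho> = cnj (a i j \<rho> \<rho>')" if "i < k" "j < k" "\<rho> < 2" "\<rho>' < 2" for i j \<rho> \<rho>'
    unfolding ga[OF that] ga[OF that(2,1,4,3)] by (simp add: mult.commute)
  have pdA: "pdm \<eta> {..<k} (\<lambda>i j. (\<lambda>(i,\<rho>) (j,\<rho>'). a i j \<rho> \<rho>') (i,0::nat) (j,0))"
    by (rule pdm_restrict[OF pd finI]) (auto intro: inj_onI)
  obtain c where c: "\<forall>i<k. \<forall>j<k. (\<Sum>t<k. a i t 0 0 * c t j) = a i j 0 1"
    using pdm_solve[OF pdA[simplified] \<eta>, of "\<lambda>i j. a i j 0 1"] by blast
  define w where "w = (\<lambda>t j. g t (j,1::nat) - (\<Sum>m<k. g t (m,0) * c m j))"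
  define G where "G = (\<lambda>(t,f::nat) (j,\<rho>::nat). if f = 0 then (if \<rho> < 2 then g t (j,\<rho>) else (\<Sum>m<k. g t (m,1) * c m j))
                              else (if \<rho> = 2 then w t j else 0))"
  have S: "(\<Sum>s\<in>?I \<times> {..<2}. cnj (G s x) * G s y) = (\<Sum>t\<in>?I. cnj (G (t,0) x) * G (t,0) y + cnj (G (t,1) x) * G (t,1) y)" for x y
    by (rule sum_times2)
  have P1: "(\<Sum>s\<in>?I \<times> {..<2}. cnj (G s (i,\<rho>)) * G s (j,\<rho>')) = a i j \<rho> \<rho>'" if "i < k" "j < k" "\<rho> < 2" "\<rho>' < 2" for i j \<rho> \<rho>'
    unfolding S ga[OF that] using that by (simp add: G_def)
  have P2: "(\<Sum>s\<in>?I \<times> {..<2}. cnj (G s (i,1)) * G s (j,2)) = a i j 0 1" if "i < k" "j < k" for i j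
  proof -
    have "(\<Sum>s\<in>?I \<times> {..<2}. cnj (G s (i,1)) * G s (j,2)) = (\<Sum>t\<in>?I. cnj (g t (i,1)) * (\<Sum>m<k. g t (m,1) * c m j))"
      unfolding S by (simp add: G_def)
    also have "\<dots> = (\<Sum>m<k. (\<Sum>t\<in>?I. cnj (g t (i,1)) * g t (m,1)) * c m j)" by (rule swap_lin)
    also have "\<dots> = (\<Sum>m<k. a i m 0 0 * c m j)"
      using that T by (intro sum.cong refl) (simp add: ga[symmetric])
    also have "\<dots> = a i j 0 1" using c that by simp
    finally show ?thesis .
  qed
  have P3: "(\<Sum>s\<in>?I \<times> {..<2}. cnj (G s (i,2)) * G s (j,2)) = a i j 0 0" if "i < k" "j < k" for i j
  proof -
    have "(\<Sum>s\<in>?I \<times> {..<2}. cnj (G s (i,2)) * G s (j,2)) =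
       (\<Sum>t\<in>?I. cnj (\<Sum>m<k. g t (m,1) * c m i) * (\<Sum>m<k. g t (m,1) * c m j)) + (\<Sum>t\<in>?I. cnj (w t i) * w t j)"
      unfolding S by (simp add: G_def sum.distrib)
    also have "(\<Sum>t\<in>?I. cnj (\<Sum>m<k. g t (m,1) * c m i) * (\<Sum>m<k. g t (m,1) * c m j)) =
        (\<Sum>m<k. cnj (c m i) * a m j 0 1)"
    proof -
      have "(\<Sum>t\<in>?I. cnj (\<Sum>m<k. g t (m,1) * c m i) * (\<Sum>m<k. g t (m,1) * c m j)) =
         (\<Sum>m<k. cnj (c m i) * (\<Sum>m'<k. (\<Sum>t\<in>?I. cnj (g t (m,1)) * g t (m',1)) * c m' j))"
        by (rule swap_bil)
      also have "\<dots> = (\<Sum>m<k. cnj (c m i) * (\<Sum>m'<k. a m m' 0 0 * c m' j))"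
        using T by (intro sum.cong refl arg_cong2[where f="(*)"]) (simp_all add: ga[symmetric])
      also have "\<dots> = (\<Sum>m<k. cnj (c m i) * a m j 0 1)"
        using c that by simp
      finally show ?thesis .
    qed
    also have "(\<Sum>t\<in>?I. cnj (w t i) * w t j) = a i j 0 0 - (\<Sum>m<k. a i m 1 0 * c m j)"
    proof -
      have e: "cnj (w t i) * w t j = cnj (g t (i,1)) * g t (j,1) - cnj (g t (i,1)) * (\<Sum>m<k. g t (m,0) * c m j)
              - cnj (\<Sum>m<k. g t (m,0) * c m i) * g t (j,1) + cnj (\<Sum>m<k. g t (m,0) * c m i) * (\<Sum>m<k. g t (m,0) * c m j)" for t
        unfolding w_def by (simp add: algebra_simps)
      have e1: "(\<Sum>t\<in>?I. cnj (g t (i,1)) * g t (j,1)) = a i j 0 0" using ga[of i j 1 1] that T by simp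
      have e2: "(\<Sum>t\<in>?I. cnj (g t (i,1)) * (\<Sum>m<k. g t (m,0) * c m j)) = (\<Sum>m<k. a i m 1 0 * c m j)"
        unfolding swap_lin using that by (intro sum.cong refl) (simp add: ga[symmetric])
      have e3: "(\<Sum>t\<in>?I. cnj (\<Sum>m<k. g t (m,0) * c m i) * g t (j,1)) = (\<Sum>m<k. cnj (c m i) * a m j 0 1)"
        unfolding swap_lin' using that by (intro sum.cong refl) (simp add: ga[symmetric])
      have e4: "(\<Sum>t\<in>?I. cnj (\<Sum>m<k. g t (m,0) * c m i) * (\<Sum>m<k. g t (m,0) * c m j)) = (\<Sum>m<k. cnj (c m i) * a m j 0 1)"
      proof -
        have "(\<Sum>t\<in>?I. cnj (\<Sum>m<k. g t (m,0) * c m i) * (\<Sum>m<k. g t (m,0) * c m j)) =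
           (\<Sum>m<k. cnj (c m i) * (\<Sum>m'<k. (\<Sum>t\<in>?I. cnj (g t (m,0)) * g t (m',0)) * c m' j))"
          by (rule swap_bil)
        also have "\<dots> = (\<Sum>m<k. cnj (c m i) * (\<Sum>m'<k. a m m' 0 0 * c m' j))"
          by (intro sum.cong refl arg_cong2[where f="(*)"]) (simp_all add: ga[symmetric])
        also have "\<dots> = (\<Sum>m<k. cnj (c m i) * a m j 0 1)"
          using c that by simp
        finally show ?thesis .
      qed
      show ?thesis unfolding e by (simp only: sum_subtractf sum.distrib e1 e2 e3 e4) simp
    qed
    also have "(\<Sum>m<k. cnj (c m i) * a m j 0 1) = (\<Sum>m<k. a i m 1 0 * c m j)"
    proof -
      have "(\<Sum>m<k. cnj (c m i) * a m j 0 1) = (\<Sum>m<k. cnj (c m i) * (\<Sum>m'<k. a m m' 0 0 * c m' j))"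
        using c that by simp
      also have "\<dots> = (\<Sum>m'<k. (\<Sum>m<k. cnj (c m i) * a m m' 0 0) * c m' j)"
        by (rule swap_lin)
      also have "\<dots> = (\<Sum>m'<k. a i m' 1 0 * c m' j)"
      proof (intro sum.cong refl arg_cong2[where f="(*)"])
        fix m' assume m': "m' \<in> {..<k}"
        have "(\<Sum>m<k. cnj (c m i) * a m m' 0 0) = cnj (\<Sum>m<k. a m' m 0 0 * c m i)"
        proof -
          have "(\<Sum>m<k. cnj (c m i) * a m m' 0 0) = (\<Sum>m<k. cnj (a m' m 0 0 * c m i))"
          proof (rule sum.cong[OF refl])
            fix m assume "m \<in> {..<k}"
            hence "a m m' 0 0 = cnj (a m' m 0 0)" using herm[of m' m 0 0] m' by simp
            thus "cnj (c m i) * a m m' 0 0 = cnj (a m' m 0 0 * c m i)" by (simp add: mult.commute)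
          qed
          also have "\<dots> = cnj (\<Sum>m<k. a m' m 0 0 * c m i)" by (rule cnj_sum[symmetric])
          finally show ?thesis .
        qed
        also have "\<dots> = cnj (a m' i 0 1)" using c that m' by simp
        also have "\<dots> = a i m' 1 0" using herm[of m' i 0 1] that m' by simp
        finally show "(\<Sum>m<k. cnj (c m i) * a m m' 0 0) = a i m' 1 0" .
      qed
      finally show ?thesis .
    qed
    finally show ?thesis by simp
  qed
  show ?thesis using P1 P2 P3 by blast
qed




definition Fz :: "(nat \<Rightarrow> nat \<Rightarrow> nat \<Rightarrow> nat \<Rightarrow> nat \<Rightarrow> nat \<Rightarrow> complex) \<Rightarrow> complex" where
  "Fz Z = 3 * (Z 0 0 0 0 0 0 + Z 1 1 0 0 0 0) + Z 1 0 0 0 1 1 - Z 0 1 0 0 1 1 - Z 1 0 1 1 0 0 + Z 0 1 1 1 0 0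
      - Z 1 0 0 1 1 0 - Z 0 1 0 1 1 0 - Z 1 0 1 0 0 1 - Z 0 1 1 0 0 1"

definition Zab :: "nat \<Rightarrow> nat \<Rightarrow> (nat \<Rightarrow> nat \<Rightarrow> nat \<Rightarrow> nat \<Rightarrow> complex) \<Rightarrow> (nat \<Rightarrow> nat \<Rightarrow> nat \<Rightarrow> nat \<Rightarrow> complex)
   \<Rightarrow> (nat \<times> nat \<Rightarrow> nat \<Rightarrow> complex) \<Rightarrow> nat \<Rightarrow> nat \<Rightarrow> nat \<Rightarrow> nat \<Rightarrow> nat \<Rightarrow> nat \<Rightarrow> complex" where
  "Zab k l a b \<delta> = (\<lambda>i j \<rho> \<sigma> \<rho>' \<sigma>'. \<Sum>i1<k. \<Sum>j1<l. \<Sum>i2<k. \<Sum>j2<l.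
       cnj (\<delta> (i1, j1) i) * (a i1 i2 \<rho> \<rho>' * b j1 j2 \<sigma> \<sigma>') * \<delta> (i2, j2) j)"

lemma qf_support:
  assumes "finite I" "S \<subseteq> I" "\<forall>x\<in>I - S. v x = 0"
  shows "qf I M v = qf S M v"
proof -
  have "qf I M v = (\<Sum>x\<in>S. \<Sum>y\<in>I. cnj (v x) * M x y * v y)"
    unfolding qf_def using assms by (intro sum.mono_neutral_right) auto
  also have "\<dots> = qf S M v"
    unfolding qf_def using assms by (intro sum.cong refl sum.mono_neutral_right) auto
  finally show ?thesis .
qed

lemma sum_pair: "(\<Sum>s\<in>A \<times> B. P (fst s) (snd s)) = (\<Sum>sa\<in>A. \<Sum>sb\<in>B. P sa sb)"
  by (simp add: sum.cartesian_product case_prod_beta)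

lemma gram_tensor:
  "(\<Sum>s\<in>A \<times> B. cnj (\<Sum>i1\<in>I. \<Sum>j1\<in>J. f (fst s) i1 * h (snd s) j1 * d i1 j1) *
       (\<Sum>i2\<in>I. \<Sum>j2\<in>J. f' (fst s) i2 * h' (snd s) j2 * d' i2 j2)) =
   (\<Sum>i1\<in>I. \<Sum>j1\<in>J. \<Sum>i2\<in>I. \<Sum>j2\<in>J. cnj (d i1 j1) *
       ((\<Sum>sa\<in>A. cnj (f sa i1) * f' sa i2) * (\<Sum>sb\<in>B. cnj (h sb j1) * h' sb j2)) * (d' i2 j2 :: complex))"
proof -
  let ?X = "\<lambda>sa sb i1 j1 i2 j2. cnj (d i1 j1) * ((cnj (f sa i1) * f' sa i2) * (cnj (h sb j1) * h' sb j2)) * d' i2 j2"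
  have "(\<Sum>s\<in>A \<times> B. cnj (\<Sum>i1\<in>I. \<Sum>j1\<in>J. f (fst s) i1 * h (snd s) j1 * d i1 j1) *
       (\<Sum>i2\<in>I. \<Sum>j2\<in>J. f' (fst s) i2 * h' (snd s) j2 * d' i2 j2)) =
       (\<Sum>sa\<in>A. \<Sum>sb\<in>B. cnj (\<Sum>i1\<in>I. \<Sum>j1\<in>J. f sa i1 * h sb j1 * d i1 j1) *
       (\<Sum>i2\<in>I. \<Sum>j2\<in>J. f' sa i2 * h' sb j2 * d' i2 j2))"
    by (rule sum_pair[where P = "\<lambda>sa sb. cnj (\<Sum>i1\<in>I. \<Sum>j1\<in>J. f sa i1 * h sb j1 * d i1 j1) *
       (\<Sum>i2\<in>I. \<Sum>j2\<in>J. f' sa i2 * h' sb j2 * d' i2 j2)"])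
  also have "\<dots> = (\<Sum>sa\<in>A. \<Sum>sb\<in>B. \<Sum>i1\<in>I. \<Sum>j1\<in>J. \<Sum>i2\<in>I. \<Sum>j2\<in>J. ?X sa sb i1 j1 i2 j2)"
    by (simp add: sum_distrib_left sum_distrib_right mult_ac)
  also have "\<dots> = (\<Sum>i1\<in>I. \<Sum>j1\<in>J. \<Sum>sa\<in>A. \<Sum>sb\<in>B. \<Sum>i2\<in>I. \<Sum>j2\<in>J. ?X sa sb i1 j1 i2 j2)"
    by (rule sum4_swap)
  also have "\<dots> = (\<Sum>i1\<in>I. \<Sum>j1\<in>J. \<Sum>i2\<in>I. \<Sum>j2\<in>J. \<Sum>sa\<in>A. \<Sum>sb\<in>B. ?X sa sb i1 j1 i2 j2)"
    by (intro sum.cong refl sum4_swap)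
  also have "\<dots> = (\<Sum>i1\<in>I. \<Sum>j1\<in>J. \<Sum>i2\<in>I. \<Sum>j2\<in>J. cnj (d i1 j1) *
       (\<Sum>sa\<in>A. \<Sum>sb\<in>B. (cnj (f sa i1) * f' sa i2) * (cnj (h sb j1) * h' sb j2)) * (d' i2 j2 :: complex))"
    by (simp add: sum_distrib_left sum_distrib_right mult_ac)
  also have "\<dots> = (\<Sum>i1\<in>I. \<Sum>j1\<in>J. \<Sum>i2\<in>I. \<Sum>j2\<in>J. cnj (d i1 j1) *
       ((\<Sum>sa\<in>A. cnj (f sa i1) * f' sa i2) * (\<Sum>sb\<in>B. cnj (h sb j1) * h' sb j2)) * (d' i2 j2 :: complex))"
    by (simp only: sum_product)
  finally show ?thesis .
qed

lemma lt3_cases: "r < (3::nat) \<Longrightarrow> r = 0 \<or> r = 1 \<or> r = 2" by auto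

lemma toep3:
  fixes k :: nat and a :: "nat \<Rightarrow> nat \<Rightarrow> nat \<Rightarrow> nat \<Rightarrow> complex" and G :: "'s \<Rightarrow> nat \<times> nat \<Rightarrow> complex" and S :: "'s set"
  defines "ae \<equiv> (\<lambda>i j r r'. \<Sum>s\<in>S. cnj (G s (i,r)) * G s (j,r'))"
  assumes c: "\<forall>i<k. \<forall>j<k. \<forall>\<rho><2. \<forall>\<rho>'<2. ae i j \<rho> \<rho>' = a i j \<rho> \<rho>'"
    and c12: "\<forall>i<k. \<forall>j<k. ae i j 1 2 = a i j 0 1"
    and c22: "\<forall>i<k. \<forall>j<k. ae i j 2 2 = a i j 0 0"
    and T: "\<forall>i<k. \<forall>j<k. a i j 1 1 = a i j 0 0"
    and ij: "i < k" "j < k" and r: "r < 3" "r' < 3"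
  shows "ae i j r r' = ae i j (r - r') (r' - r)"
proof -
  have herm: "ae j i r' r = cnj (ae i j r r')" for i j r r' unfolding ae_def by (simp add: mult.commute)
  have "ae i j 2 1 = ae i j 1 0"
  proof -
    have "ae i j 2 1 = cnj (ae j i 1 2)" using herm[of j i 1 2] by simp
    also have "\<dots> = cnj (ae j i 0 1)" using c12 c ij by simp
    also have "\<dots> = ae i j 1 0" using herm[of j i 0 1] by simp
    finally show ?thesis .
  qed
  moreover have "ae i j 1 1 = ae i j 0 0" using c T ij by simp
  moreover have "ae i j 2 2 = ae i j 0 0" using c c22 ij by simp
  moreover have "ae i j 1 2 = ae i j 0 1" using c c12 ij by simp
  ultimately show ?thesis using lt3_cases[OF r(1)] lt3_cases[OF r(2)] by auto
qed

lemma key_pd: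
  fixes k l :: nat and a b :: "nat \<Rightarrow> nat \<Rightarrow> nat \<Rightarrow> nat \<Rightarrow> complex" and \<delta> :: "nat \<times> nat \<Rightarrow> nat \<Rightarrow> complex"
  assumes pa: "pdm \<eta> ({..<k} \<times> {..<2}) (\<lambda>(i,\<rho>) (j,\<rho>'). a i j \<rho> \<rho>')"
      and pb: "pdm \<eta> ({..<l} \<times> {..<2}) (\<lambda>(i,\<rho>) (j,\<rho>'). b i j \<rho> \<rho>')"
      and \<eta>: "0 < \<eta>"
      and Ta: "\<forall>i<k. \<forall>j<k. a i j 1 1 = a i j 0 0" and Tb: "\<forall>i<l. \<forall>j<l. b i j 1 1 = b i j 0 0"
  shows "0 \<le> Fz (Zab k l a b \<delta>)"
proof -
  let ?Sa = "({..<k} \<times> {..<2::nat}) \<times> {..<2::nat}"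
  let ?Sb = "({..<l} \<times> {..<2::nat}) \<times> {..<2::nat}"
  let ?I = "{..<2::nat} \<times> {..<3::nat} \<times> {..<3::nat}"
  obtain Ga where Ga: "\<forall>i<k. \<forall>j<k. \<forall>\<rho><2. \<forall>\<rho>'<2. (\<Sum>s\<in>?Sa. cnj (Ga s (i,\<rho>)) * Ga s (j,\<rho>')) = a i j \<rho> \<rho>'"
     "\<forall>i<k. \<forall>j<k. (\<Sum>s\<in>?Sa. cnj (Ga s (i,1)) * Ga s (j,2)) = a i j 0 1"
     "\<forall>i<k. \<forall>j<k. (\<Sum>s\<in>?Sa. cnj (Ga s (i,2)) * Ga s (j,2)) = a i j 0 0"
    using toep_ext[OF pa \<eta> Ta] by blast
  obtain Gb where Gb: "\<forall>i<l. \<forall>j<l. \<forall>\<rho><2. \<forall>\<rho>'<2. (\<Sum>s\<in>?Sb. cnj (Gb s (i,\<rho>)) * Gb s (j,\<rho>')) = b i j \<rho> \<rho>'"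
     "\<forall>i<l. \<forall>j<l. (\<Sum>s\<in>?Sb. cnj (Gb s (i,1)) * Gb s (j,2)) = b i j 0 1"
     "\<forall>i<l. \<forall>j<l. (\<Sum>s\<in>?Sb. cnj (Gb s (i,2)) * Gb s (j,2)) = b i j 0 0"
    using toep_ext[OF pb \<eta> Tb] by blast
  define ae where "ae = (\<lambda>i j r r'. \<Sum>s\<in>?Sa. cnj (Ga s (i,r)) * Ga s (j,r'))"
  define be where "be = (\<lambda>i j r r'. \<Sum>s\<in>?Sb. cnj (Gb s (i,r)) * Gb s (j,r'))"
  have ae_toep: "ae i j r r' = ae i j (r - r') (r' - r)" if "i < k" "j < k" "r < 3" "r' < 3" for i j r r'
    unfolding ae_def by (rule toep3[OF Ga Ta that])
  have be_toep: "be i j r r' = be i j (r - r') (r' - r)" if "i < l" "j < l" "r < 3" "r' < 3" for i j r r'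
    unfolding be_def by (rule toep3[OF Gb Tb that])
  have ae_c: "ae i j r r' = a i j r r'" if "i < k" "j < k" "r < 2" "r' < 2" for i j r r'
    using Ga(1) that unfolding ae_def by blast
  have be_c: "be i j r r' = b i j r r'" if "i < l" "j < l" "r < 2" "r' < 2" for i j r r'
    using Gb(1) that unfolding be_def by blast
  define Zt where "Zt = (\<lambda>(i::nat,r::nat,s::nat) (j::nat,r'::nat,s'::nat). \<Sum>i1<k. \<Sum>j1<l. \<Sum>i2<k. \<Sum>j2<l.
       cnj (\<delta> (i1,j1) i) * (ae i1 i2 r r' * be j1 j2 s s') * \<delta> (i2,j2) j)"
  have Zt_psd: "psd_on ?I Zt"
  proof (rule psd_cong[OF psd_gram[of "?Sa \<times> ?Sb" ?I
        "\<lambda>s (j,r',s'). \<Sum>i2<k. \<Sum>j2<l. Ga (fst s) (i2,r') * Gb (snd s) (j2,s') * \<delta> (i2,j2) j"]])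
    show "finite (?Sa \<times> ?Sb)" by simp
    fix x y :: "nat \<times> nat \<times> nat"
    obtain i r s where x: "x = (i,r,s)" by (cases x) auto
    obtain j r' s' where y: "y = (j,r',s')" by (cases y) auto
    show "(\<Sum>t\<in>?Sa \<times> ?Sb. cnj ((\<lambda>s (j,r',s'). \<Sum>i2<k. \<Sum>j2<l. Ga (fst s) (i2,r') * Gb (snd s) (j2,s') * \<delta> (i2,j2) j) t x) *
            (\<lambda>s (j,r',s'). \<Sum>i2<k. \<Sum>j2<l. Ga (fst s) (i2,r') * Gb (snd s) (j2,s') * \<delta> (i2,j2) j) t y) = Zt x y"
      unfolding x y Zt_def ae_def be_def
      by (simp only: prod.case gram_tensor[where f="\<lambda>sa i1. Ga sa (i1,r)" and h="\<lambda>sb j1. Gb sb (j1,s)"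
            and d="\<lambda>i1 j1. \<delta> (i1,j1) i" and f'="\<lambda>sa i2. Ga sa (i2,r')" and h'="\<lambda>sb j2. Gb sb (j2,s')"
            and d'="\<lambda>i2 j2. \<delta> (i2,j2) j"])
  qed
  define Zc where "Zc = (\<lambda>i j r s r' s'. Zt (i,r,s) (j,r',s'))"
  have Zt_toep: "Zt (i,r,s) (j,r',s') = Zc i j (r - r') (s - s') (r' - r) (s' - s)"
    if "r < 3" "r' < 3" "s < 3" "s' < 3" for i j r s r' s'
    unfolding Zc_def Zt_def prod.case using that
    by (intro sum.cong refl) (simp add: ae_toep[of _ _ r r'] be_toep[of _ _ s s'])
  have corner: "Zab k l a b \<delta> i j \<rho> \<sigma> \<rho>' \<sigma>' = Zc i j (\<rho> - \<rho>') (\<sigma> - \<sigma>') (\<rho>' - \<rho>) (\<sigma>' - \<sigma>)"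
    if "\<rho> < 2" "\<sigma> < 2" "\<rho>' < 2" "\<sigma>' < 2" for i j \<rho> \<sigma> \<rho>' \<sigma>'
  proof -
    have "Zab k l a b \<delta> i j \<rho> \<sigma> \<rho>' \<sigma>' = Zt (i,\<rho>,\<sigma>) (j,\<rho>',\<sigma>')"
      unfolding Zab_def Zt_def prod.case using that
      by (intro sum.cong refl) (simp add: ae_c be_c)
    also have "\<dots> = Zc i j (\<rho> - \<rho>') (\<sigma> - \<sigma>') (\<rho>' - \<rho>) (\<sigma>' - \<sigma>)" using that by (intro Zt_toep) auto
    finally show ?thesis .
  qed
  have F: "Fz (Zab k l a b \<delta>) = 3 * (Zc 0 0 0 0 0 0 + Zc 1 1 0 0 0 0) + Zc 1 0 0 0 1 1 - Zc 0 1 0 0 1 1 - Zc 1 0 1 1 0 0 + Zc 0 1 1 1 0 0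
      - Zc 1 0 0 1 1 0 - Zc 0 1 0 1 1 0 - Zc 1 0 1 0 0 1 - Zc 0 1 1 0 0 1"
    unfolding Fz_def by (simp add: corner)
  define v0 :: "nat \<times> nat \<times> nat \<Rightarrow> complex" where "v0 = (\<lambda>x. if x = (1,0,0) then 1 else if x = (1,0,2) then (- 1) else if x = (0,1,1) then 3 else if x = (1,2,0) then (- 1) else if x = (1,2,2) then (- 1) else 0)"
  have q0: "0 \<le> qf {(1,0,0),(1,0,2),(0,1,1),(1,2,0),(1,2,2)} Zt v0"
  proof -
    have "0 \<le> qf ?I Zt v0" using Zt_psd unfolding psd_iff by blast
    also have "qf ?I Zt v0 = qf {(1,0,0),(1,0,2),(0,1,1),(1,2,0),(1,2,2)} Zt v0"
      by (rule qf_support) (auto simp: v0_def)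
    finally show ?thesis .
  qed
  define v1 :: "nat \<times> nat \<times> nat \<Rightarrow> complex" where "v1 = (\<lambda>x. if x = (0,0,0) then (- 1) else if x = (0,0,2) then (- 1) else if x = (1,1,1) then 3 else if x = (0,2,0) then (- 1) else if x = (0,2,2) then 1 else 0)"
  have q1: "0 \<le> qf {(0,0,0),(0,0,2),(1,1,1),(0,2,0),(0,2,2)} Zt v1"
  proof -
    have "0 \<le> qf ?I Zt v1" using Zt_psd unfolding psd_iff by blast
    also have "qf ?I Zt v1 = qf {(0,0,0),(0,0,2),(1,1,1),(0,2,0),(0,2,2)} Zt v1"
      by (rule qf_support) (auto simp: v1_def)
    finally show ?thesis .
  qed
  define v2 :: "nat \<times> nat \<times> nat \<Rightarrow> complex" where "v2 = (\<lambda>x. if x = (0,1,1) then 1 else 0)"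
  have q2: "0 \<le> qf {(0,1,1)} Zt v2"
  proof -
    have "0 \<le> qf ?I Zt v2" using Zt_psd unfolding psd_iff by blast
    also have "qf ?I Zt v2 = qf {(0,1,1)} Zt v2"
      by (rule qf_support) (auto simp: v2_def)
    finally show ?thesis .
  qed
  define v3 :: "nat \<times> nat \<times> nat \<Rightarrow> complex" where "v3 = (\<lambda>x. if x = (1,1,1) then 1 else 0)"
  have q3: "0 \<le> qf {(1,1,1)} Zt v3"
  proof -
    have "0 \<le> qf ?I Zt v3" using Zt_psd unfolding psd_iff by blast
    also have "qf ?I Zt v3 = qf {(1,1,1)} Zt v3"
      by (rule qf_support) (auto simp: v3_def)
    finally show ?thesis .
  qed
  define v4 :: "nat \<times> nat \<times> nat \<Rightarrow> complex" where "v4 = (\<lambda>x. if x = (0,0,0) then 1 else if x = (0,2,2) then 1 else 0)"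
  have q4: "0 \<le> qf {(0,0,0),(0,2,2)} Zt v4"
  proof -
    have "0 \<le> qf ?I Zt v4" using Zt_psd unfolding psd_iff by blast
    also have "qf ?I Zt v4 = qf {(0,0,0),(0,2,2)} Zt v4"
      by (rule qf_support) (auto simp: v4_def)
    finally show ?thesis .
  qed
  define v5 :: "nat \<times> nat \<times> nat \<Rightarrow> complex" where "v5 = (\<lambda>x. if x = (1,0,0) then 1 else if x = (1,2,2) then 1 else 0)"
  have q5: "0 \<le> qf {(1,0,0),(1,2,2)} Zt v5"
  proof -
    have "0 \<le> qf ?I Zt v5" using Zt_psd unfolding psd_iff by blast
    also have "qf ?I Zt v5 = qf {(1,0,0),(1,2,2)} Zt v5"
      by (rule qf_support) (auto simp: v5_def)
    finally show ?thesis .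
  qed
  define v6 :: "nat \<times> nat \<times> nat \<Rightarrow> complex" where "v6 = (\<lambda>x. if x = (0,0,2) then 1 else if x = (0,2,0) then (- 1) else 0)"
  have q6: "0 \<le> qf {(0,0,2),(0,2,0)} Zt v6"
  proof -
    have "0 \<le> qf ?I Zt v6" using Zt_psd unfolding psd_iff by blast
    also have "qf ?I Zt v6 = qf {(0,0,2),(0,2,0)} Zt v6"
      by (rule qf_support) (auto simp: v6_def)
    finally show ?thesis .
  qed
  define v7 :: "nat \<times> nat \<times> nat \<Rightarrow> complex" where "v7 = (\<lambda>x. if x = (1,0,2) then 1 else if x = (1,2,0) then (- 1) else 0)"
  have q7: "0 \<le> qf {(1,0,2),(1,2,0)} Zt v7"
  proof -
    have "0 \<le> qf ?I Zt v7" using Zt_psd unfolding psd_iff by blast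
    also have "qf ?I Zt v7 = qf {(1,0,2),(1,2,0)} Zt v7"
      by (rule qf_support) (auto simp: v7_def)
    finally show ?thesis .
  qed
  have id: "qf {(1,0,0),(1,0,2),(0,1,1),(1,2,0),(1,2,2)} Zt v0 + qf {(0,0,0),(0,0,2),(1,1,1),(0,2,0),(0,2,2)} Zt v1 + qf {(0,1,1)} Zt v2 + qf {(1,1,1)} Zt v3 + qf {(0,0,0),(0,2,2)} Zt v4 + qf {(1,0,0),(1,2,2)} Zt v5 + qf {(0,0,2),(0,2,0)} Zt v6 + qf {(1,0,2),(1,2,0)} Zt v7 = 6 * Fz (Zab k l a b \<delta>)"
    unfolding F by (simp add: qf_def Zt_toep v0_def v1_def v2_def v3_def v4_def v5_def v6_def v7_def)
  have "0 \<le> qf {(1,0,0),(1,0,2),(0,1,1),(1,2,0),(1,2,2)} Zt v0 + qf {(0,0,0),(0,0,2),(1,1,1),(0,2,0),(0,2,2)} Zt v1 + qf {(0,1,1)} Zt v2 + qf {(1,1,1)} Zt v3 + qf {(0,0,0),(0,2,2)} Zt v4 + qf {(1,0,0),(1,2,2)} Zt v5 + qf {(0,0,2),(0,2,0)} Zt v6 + qf {(1,0,2),(1,2,0)} Zt v7"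
    using q0 q1 q2 q3 q4 q5 q6 q7 by (intro add_nonneg_nonneg)
  hence "0 \<le> 6 * Fz (Zab k l a b \<delta>)" unfolding id .
  thus ?thesis by (simp add: less_eq_complex_def)
qed




lemma quad_limit:
  fixes r0 r1 r2 :: real
  assumes "\<forall>\<eta>>0. 0 \<le> r0 + \<eta> * r1 + \<eta>\<^sup>2 * r2"
  shows "0 \<le> r0"
proof (rule ccontr)
  assume "\<not> 0 \<le> r0"
  hence r0: "r0 < 0" by simp
  define \<eta> where "\<eta> = min 1 (- r0 / (2 * (\<bar>r1\<bar> + \<bar>r2\<bar> + 1)))"
  have d: "0 < 2 * (\<bar>r1\<bar> + \<bar>r2\<bar> + 1)" by simp
  have "0 < - r0 / (2 * (\<bar>r1\<bar> + \<bar>r2\<bar> + 1))" using r0 d by (intro divide_pos_pos) auto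
  hence pos: "0 < \<eta>" unfolding \<eta>_def by simp
  have le1: "\<eta> \<le> 1" unfolding \<eta>_def by simp
  have le2: "\<eta> * (\<bar>r1\<bar> + \<bar>r2\<bar> + 1) \<le> - r0 / 2"
  proof -
    have "\<eta> \<le> - r0 / (2 * (\<bar>r1\<bar> + \<bar>r2\<bar> + 1))" unfolding \<eta>_def by simp
    moreover have "0 < \<bar>r1\<bar> + \<bar>r2\<bar> + 1" by simp
    ultimately show ?thesis by (simp add: field_simps)
  qed
  have h1: "\<eta> * r1 \<le> \<eta> * \<bar>r1\<bar>" using pos by (simp add: mult_left_mono)
  have h2: "\<eta>\<^sup>2 * r2 \<le> \<eta> * \<bar>r2\<bar>"
  proof -
    have "\<eta>\<^sup>2 * r2 \<le> \<eta>\<^sup>2 * \<bar>r2\<bar>" by (simp add: mult_left_mono)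
    also have "\<dots> \<le> \<eta> * \<bar>r2\<bar>" using pos le1 by (simp add: power2_eq_square mult_right_mono)
    finally show ?thesis .
  qed
  have "r0 + \<eta> * r1 + \<eta>\<^sup>2 * r2 \<le> r0 + \<eta> * (\<bar>r1\<bar> + \<bar>r2\<bar> + 1)"
    using h1 h2 pos by (simp only: distrib_left mult_1_right)
  also have "\<dots> < 0" using le2 r0 by simp
  finally show False using assms pos by force
qed

definition Idm :: "nat \<Rightarrow> nat \<Rightarrow> nat \<Rightarrow> nat \<Rightarrow> complex" where
  "Idm i j \<rho> \<rho>' = (if i = j \<and> \<rho> = \<rho>' then 1 else 0)"

lemma Zab_pert:
  "Zab k l (\<lambda>i j \<rho> \<rho>'. a i j \<rho> \<rho>' + c * Idm i j \<rho> \<rho>') (\<lambda>i j \<rho> \<rho>'. b i j \<rho> \<rho>' + c * Idm i j \<rho> \<rho>') \<delta> i j \<rho> \<sigma> \<rho>' \<sigma>'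
   = Zab k l a b \<delta> i j \<rho> \<sigma> \<rho>' \<sigma>' + c * Zab k l Idm b \<delta> i j \<rho> \<sigma> \<rho>' \<sigma>' + c * Zab k l a Idm \<delta> i j \<rho> \<sigma> \<rho>' \<sigma>'
     + c\<^sup>2 * Zab k l Idm Idm \<delta> i j \<rho> \<sigma> \<rho>' \<sigma>'"
  unfolding Zab_def by (simp add: sum.distrib sum_distrib_left algebra_simps power2_eq_square)

lemma Fz_pert:
  "Fz (Zab k l (\<lambda>i j \<rho> \<rho>'. a i j \<rho> \<rho>' + c * Idm i j \<rho> \<rho>') (\<lambda>i j \<rho> \<rho>'. b i j \<rho> \<rho>' + c * Idm i j \<rho> \<rho>') \<delta>)
   = Fz (Zab k l a b \<delta>) + c * (Fz (Zab k l Idm b \<delta>) + Fz (Zab k l a Idm \<delta>)) + c\<^sup>2 * Fz (Zab k l Idm Idm \<delta>)"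
  unfolding Fz_def Zab_pert by (simp add: algebra_simps)

lemma pdm_pert:
  assumes "psd_on ({..<k} \<times> {..<2::nat}) (\<lambda>(i,\<rho>) (j,\<rho>'). a i j \<rho> \<rho>')"
  shows "pdm \<eta> ({..<k} \<times> {..<2}) (\<lambda>(i,\<rho>) (j,\<rho>'). a i j \<rho> \<rho>' + of_real \<eta> * Idm i j \<rho> \<rho>')"
  unfolding pdm_def by (rule psd_cong[OF assms]) (auto simp: Idm_def split: if_splits)

lemma key_psd:
  fixes k l :: nat and a b :: "nat \<Rightarrow> nat \<Rightarrow> nat \<Rightarrow> nat \<Rightarrow> complex" and \<delta> :: "nat \<times> nat \<Rightarrow> nat \<Rightarrow> complex"
  assumes pa: "psd_on ({..<k} \<times> {..<2}) (\<lambda>(i,\<rho>) (j,\<rho>'). a i j \<rho> \<rho>')"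
      and pb: "psd_on ({..<l} \<times> {..<2}) (\<lambda>(i,\<rho>) (j,\<rho>'). b i j \<rho> \<rho>')"
      and Ta: "\<forall>i<k. \<forall>j<k. a i j 1 1 = a i j 0 0" and Tb: "\<forall>i<l. \<forall>j<l. b i j 1 1 = b i j 0 0"
  shows "0 \<le> Re (Fz (Zab k l a b \<delta>))"
proof -
  let ?r0 = "Re (Fz (Zab k l a b \<delta>))"
  let ?r1 = "Re (Fz (Zab k l Idm b \<delta>) + Fz (Zab k l a Idm \<delta>))"
  let ?r2 = "Re (Fz (Zab k l Idm Idm \<delta>))"
  have "0 \<le> ?r0 + \<eta> * ?r1 + \<eta>\<^sup>2 * ?r2" if \<eta>: "0 < \<eta>" for \<eta>
  proof -
    have "0 \<le> Fz (Zab k l (\<lambda>i j \<rho> \<rho>'. a i j \<rho> \<rho>' + of_real \<eta> * Idm i j \<rho> \<rho>') (\<lambda>i j \<rho> \<rho>'. b i j \<rho> \<rho>' + of_real \<eta> * Idm i j \<rho> \<rho>') \<delta>)"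
      by (rule key_pd[OF pdm_pert[OF pa] pdm_pert[OF pb] \<eta>]) (use Ta Tb in \<open>auto simp: Idm_def\<close>)
    hence "0 \<le> Re (Fz (Zab k l a b \<delta>) + of_real \<eta> * (Fz (Zab k l Idm b \<delta>) + Fz (Zab k l a Idm \<delta>)) + (of_real \<eta>)\<^sup>2 * Fz (Zab k l Idm Idm \<delta>))"
      unfolding Fz_pert by (simp add: less_eq_complex_def)
    thus ?thesis by (simp add: power2_eq_square)
  qed
  thus ?thesis by (intro quad_limit[of ?r0 ?r1 ?r2]) auto
qed




definition cls :: "nat \<Rightarrow> nat \<Rightarrow> nat" where "cls n r = (if r = n - 1 then 0 else r)"
definition pos :: "nat \<Rightarrow> nat \<Rightarrow> nat" where "pos n r = (if r = n - 1 then 1 else 0)"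

definition Vg :: "nat \<Rightarrow> nat \<Rightarrow> nat \<Rightarrow> nat \<Rightarrow> complex" where
  "Vg \<rho> \<sigma> \<kappa> i = (if \<rho> = 0 \<and> \<sigma> = 0 then (if \<kappa> = i then 1 else 0)
     else if \<rho> = 1 \<and> \<sigma> = 0 then (if \<kappa> = 3 - i then 1 else 0)
     else if \<rho> = 0 \<and> \<sigma> = 1 then (if \<kappa> = 2 + i then 1 else 0)
     else (if \<kappa> = 0 \<and> i = 1 then 1 else if \<kappa> = 1 \<and> i = 0 then -1 else 0))"

definition X2 :: "nat \<Rightarrow> nat \<Rightarrow> nat \<Rightarrow> nat \<Rightarrow> nat \<Rightarrow> nat \<Rightarrow> complex" where
  "X2 i j \<rho> \<sigma> \<rho>' \<sigma>' = (\<Sum>\<kappa><4. cnj (Vg \<rho> \<sigma> \<kappa> i) * Vg \<rho>' \<sigma>' \<kappa> j)"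

definition Xn :: "nat \<Rightarrow> nat \<Rightarrow> nat \<Rightarrow> nat \<Rightarrow> nat \<times> nat \<Rightarrow> nat \<times> nat \<Rightarrow> complex" where
  "Xn n m i j x y = (case x of (r,s) \<Rightarrow> case y of (r',s') \<Rightarrow>
     if cls n r = cls n r' \<and> cls m s = cls m s' then X2 i j (pos n r) (pos m s) (pos n r') (pos m s') else 0)"

lemma sum4: "(\<Sum>\<kappa><4::nat. f \<kappa>) = f 0 + f 1 + f 2 + (f 3 :: complex)"
  by (simp add: numeral_eq_Suc)

lemma lt2_cases: "r < (2::nat) \<Longrightarrow> r = 0 \<or> r = 1" by auto

lemma Fz_X2: "Fz X2 = -2"
  unfolding Fz_def X2_def sum4 Vg_def by simp


lemma cls_lt: "r < n \<Longrightarrow> cls n r < n" unfolding cls_def by auto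

lemma sum3_prod: "(\<Sum>t\<in>A \<times> B \<times> C. F t) = (\<Sum>a\<in>A. \<Sum>b\<in>B. \<Sum>c\<in>C. F (a,b,c))"
  by (simp add: sum.cartesian_product)

lemma sum_delta_cd:
  fixes n m c0 c1 d0 d1 :: nat
  assumes "c0 < n" "d0 < m"
  shows "(\<Sum>c<n. \<Sum>d<m. cnj (if c0 = c \<and> d0 = d then u else 0) * (if c1 = c \<and> d1 = d then w else 0)) =
     (if c0 = c1 \<and> d0 = d1 then cnj u * (w::complex) else 0)"
proof -
  have pt: "cnj (if c0 = c \<and> d0 = d then u else 0) * (if c1 = c \<and> d1 = d then w else 0) =
     (if d = d0 then (if c = c0 then (if c0 = c1 \<and> d0 = d1 then cnj u * w else 0) else 0) else 0)" for c d
    by auto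
  have "(\<Sum>c<n. \<Sum>d<m. cnj (if c0 = c \<and> d0 = d then u else 0) * (if c1 = c \<and> d1 = d then w else 0)) =
        (\<Sum>c<n. \<Sum>d<m. (if d = d0 then (if c = c0 then (if c0 = c1 \<and> d0 = d1 then cnj u * w else 0) else 0) else 0))"
    by (simp only: pt)
  also have "\<dots> = (\<Sum>c<n. (if c = c0 then (if c0 = c1 \<and> d0 = d1 then cnj u * w else 0) else 0))"
    using assms(2) by (subst sum.delta) auto
  also have "\<dots> = (if c0 = c1 \<and> d0 = d1 then cnj u * w else 0)"
    using assms(1) by (subst sum.delta) auto
  finally show ?thesis .
qed

lemma Xn_psd: "psd_on ({..<2} \<times> {..<n} \<times> {..<m}) (\<lambda>(i,r,s) (j,r',s'). Xn n m i j (r,s) (r',s'))"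
proof (rule psd_cong[OF psd_gram[of "{..<4::nat} \<times> {..<n} \<times> {..<m}" _
      "\<lambda>(\<kappa>,c,d) (j,r',s'). if cls n r' = c \<and> cls m s' = d then Vg (pos n r') (pos m s') \<kappa> j else 0"]])
  show "finite ({..<4::nat} \<times> {..<n} \<times> {..<m})" by simp
  fix x y assume x: "x \<in> {..<2::nat} \<times> {..<n} \<times> {..<m}" and y: "y \<in> {..<2::nat} \<times> {..<n} \<times> {..<m}"
  obtain i r s where xe: "x = (i,r,s)" by (cases x) auto
  obtain j r' s' where ye: "y = (j,r',s')" by (cases y) auto
  have r: "cls n r < n" "cls n r' < n" and s: "cls m s < m" "cls m s' < m"
    using x y xe ye cls_lt by auto
  show "(\<Sum>t\<in>{..<4::nat} \<times> {..<n} \<times> {..<m}.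
          cnj ((\<lambda>(\<kappa>,c,d) (j,r',s'). if cls n r' = c \<and> cls m s' = d then Vg (pos n r') (pos m s') \<kappa> j else 0) t x) *
          (\<lambda>(\<kappa>,c,d) (j,r',s'). if cls n r' = c \<and> cls m s' = d then Vg (pos n r') (pos m s') \<kappa> j else 0) t y) =
        (\<lambda>(i,r,s) (j,r',s'). Xn n m i j (r,s) (r',s')) x y"
    unfolding sum3_prod xe ye prod.case
    unfolding sum_delta_cd[OF r(1) s(1)]
    unfolding Xn_def X2_def prod.case by (auto intro!: sum.cong)
qed

lemma cls_pos_phi:
  assumes "2 \<le> n" "\<rho> < 2"
  shows "cls n (if \<rho> = 0 then 0 else n - 1) = 0" "pos n (if \<rho> = 0 then 0 else n - 1) = \<rho>"
  using assms unfolding cls_def pos_def by auto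

lemma not_max:
  assumes n: "2 \<le> n" and m: "2 \<le> m"
  shows "\<not> max_pos n m 2 (Xn n m)"
proof
  assume "max_pos n m 2 (Xn n m)"
  note mp = this
  have h16: "(0::real) < 1/6" by simp
  have "\<exists>k l a b (\<delta> :: nat \<times> nat \<Rightarrow> nat \<Rightarrow> complex). 1 \<le> k \<and> 1 \<le> l \<and> pos_Mk_toep n k a \<and> pos_Mk_toep m l b \<and>
          (\<forall>i<2. \<forall>j<2. \<forall>r<n. \<forall>r'<n. \<forall>s<m. \<forall>s'<m.
             complex_of_real (1/6) * (if i = j \<and> r = r' \<and> s = s' then 1 else 0) + Xn n m i j (r, s) (r', s')
             = (\<Sum>i1<k. \<Sum>j1<l. \<Sum>i2<k. \<Sum>j2<l.
                  cnj (\<delta> (i1, j1) i) * (a i1 i2 r r' * b j1 j2 s s') * \<delta> (i2, j2) j))"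
    using mp h16 unfolding max_pos_def by blast
  then obtain k l a b \<delta> where pa: "pos_Mk_toep n k a" and pb: "pos_Mk_toep m l b" and
    eq: "\<forall>i<2. \<forall>j<2. \<forall>r<n. \<forall>r'<n. \<forall>s<m. \<forall>s'<m.
             complex_of_real (1/6) * (if i = j \<and> r = r' \<and> s = s' then 1 else 0) + Xn n m i j (r, s) (r', s')
             = (\<Sum>i1<k. \<Sum>j1<l. \<Sum>i2<k. \<Sum>j2<l.
                  cnj (\<delta> (i1, j1) i) * (a i1 i2 r r' * b j1 j2 s s') * \<delta> (i2, j2) j)"
    by blast
  define \<phi> where "\<phi> = (\<lambda>\<rho>::nat. if \<rho> = 0 then 0 else n - 1)"
  define \<psi> where "\<psi> = (\<lambda>\<rho>::nat. if \<rho> = 0 then 0 else m - 1)"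
  define a2 where "a2 = (\<lambda>i j \<rho> \<rho>'. a i j (\<phi> \<rho>) (\<phi> \<rho>'))"
  define b2 where "b2 = (\<lambda>i j \<rho> \<rho>'. b i j (\<psi> \<rho>) (\<psi> \<rho>'))"
  have \<phi>: "\<phi> \<rho> < n" for \<rho> unfolding \<phi>_def using n by auto
  have \<psi>: "\<psi> \<rho> < m" for \<rho> unfolding \<psi>_def using m by auto
  have \<phi>inj: "\<rho> < 2 \<Longrightarrow> \<rho>' < 2 \<Longrightarrow> \<phi> \<rho> = \<phi> \<rho>' \<longleftrightarrow> \<rho> = \<rho>'" for \<rho> \<rho>' unfolding \<phi>_def using n by auto
  have \<psi>inj: "\<rho> < 2 \<Longrightarrow> \<rho>' < 2 \<Longrightarrow> \<psi> \<rho> = \<psi> \<rho>' \<longleftrightarrow> \<rho> = \<rho>'" for \<rho> \<rho>' unfolding \<psi>_def using m by auto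
  have a2psd: "psd_on ({..<k} \<times> {..<2}) (\<lambda>(i,\<rho>) (j,\<rho>'). a2 i j \<rho> \<rho>')"
  proof (rule psd_cong[OF psd_restrict[of "{..<k} \<times> {..<n}" "\<lambda>(i,r) (j,r'). a i j r r'" "{..<k} \<times> {..<2}" "\<lambda>(i,\<rho>). (i, \<phi> \<rho>)"]])
    show "psd_on ({..<k} \<times> {..<n}) (\<lambda>(i,r) (j,r'). a i j r r')" using pa unfolding pos_Mk_toep_def by blast
  qed (auto simp: a2_def \<phi>)
  have b2psd: "psd_on ({..<l} \<times> {..<2}) (\<lambda>(i,\<rho>) (j,\<rho>'). b2 i j \<rho> \<rho>')"
  proof (rule psd_cong[OF psd_restrict[of "{..<l} \<times> {..<m}" "\<lambda>(i,r) (j,r'). b i j r r'" "{..<l} \<times> {..<2}" "\<lambda>(i,\<rho>). (i, \<psi> \<rho>)"]])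
    show "psd_on ({..<l} \<times> {..<m}) (\<lambda>(i,r) (j,r'). b i j r r')" using pb unfolding pos_Mk_toep_def by blast
  qed (auto simp: b2_def \<psi>)
  have Ta: "\<forall>i<k. \<forall>j<k. a2 i j 1 1 = a2 i j 0 0"
  proof (intro allI impI)
    fix i j assume "i < k" "j < k"
    hence "toeplitz n (a i j)" using pa unfolding pos_Mk_toep_def in_Mk_toep_def by blast
    from this[unfolded toeplitz_def, rule_format, of "n - 1" "n - 1" 0 0]
    have "a i j (n - 1) (n - 1) = a i j 0 0" using n by simp
    thus "a2 i j 1 1 = a2 i j 0 0" unfolding a2_def \<phi>_def by simp
  qed
  have Tb: "\<forall>i<l. \<forall>j<l. b2 i j 1 1 = b2 i j 0 0"
  proof (intro allI impI)
    fix i j assume "i < l" "j < l"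
    hence "toeplitz m (b i j)" using pb unfolding pos_Mk_toep_def in_Mk_toep_def by blast
    from this[unfolded toeplitz_def, rule_format, of "m - 1" "m - 1" 0 0]
    have "b i j (m - 1) (m - 1) = b i j 0 0" using m by simp
    thus "b2 i j 1 1 = b2 i j 0 0" unfolding b2_def \<psi>_def by simp
  qed
  have eq2: "Zab k l a2 b2 \<delta> i j \<rho> \<sigma> \<rho>' \<sigma>' = complex_of_real (1/6) * (if i = j \<and> \<rho> = \<rho>' \<and> \<sigma> = \<sigma>' then 1 else 0) + X2 i j \<rho> \<sigma> \<rho>' \<sigma>'"
    if "i < 2" "j < 2" "\<rho> < 2" "\<sigma> < 2" "\<rho>' < 2" "\<sigma>' < 2" for i j \<rho> \<sigma> \<rho>' \<sigma>'
  proof -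
    have "Zab k l a2 b2 \<delta> i j \<rho> \<sigma> \<rho>' \<sigma>' = complex_of_real (1/6) * (if i = j \<and> \<phi> \<rho> = \<phi> \<rho>' \<and> \<psi> \<sigma> = \<psi> \<sigma>' then 1 else 0)
        + Xn n m i j (\<phi> \<rho>, \<psi> \<sigma>) (\<phi> \<rho>', \<psi> \<sigma>')"
      unfolding Zab_def a2_def b2_def using eq that \<phi> \<psi> by simp
    also have "\<dots> = complex_of_real (1/6) * (if i = j \<and> \<rho> = \<rho>' \<and> \<sigma> = \<sigma>' then 1 else 0) + X2 i j \<rho> \<sigma> \<rho>' \<sigma>'"
      unfolding Xn_def prod.case \<phi>_def \<psi>_def
      using \<phi>inj[of \<rho> \<rho>'] \<psi>inj[of \<sigma> \<sigma>'] that cls_pos_phi[OF n, of \<rho>] cls_pos_phi[OF n, of \<rho>']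
        cls_pos_phi[OF m, of \<sigma>] cls_pos_phi[OF m, of \<sigma>'] unfolding \<phi>_def \<psi>_def by simp
    finally show ?thesis .
  qed
  have "0 \<le> Re (Fz (Zab k l a2 b2 \<delta>))" by (rule key_psd[OF a2psd b2psd Ta Tb])
  moreover have "Fz (Zab k l a2 b2 \<delta>) = Fz (\<lambda>i j \<rho> \<sigma> \<rho>' \<sigma>'. complex_of_real (1/6) * (if i = j \<and> \<rho> = \<rho>' \<and> \<sigma> = \<sigma>' then 1 else 0)) + Fz X2"
    unfolding Fz_def by (simp add: eq2)
  moreover have "Fz (\<lambda>i j \<rho> \<sigma> \<rho>' \<sigma>'. complex_of_real (1/6) * (if i = j \<and> \<rho> = \<rho>' \<and> \<sigma> = \<sigma>' then 1 else 0)) = 1"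
    unfolding Fz_def by simp
  ultimately show False using Fz_X2 by simp
qed


lemma sum9:
  assumes "\<alpha> < 3" "\<beta> < (3::nat)"
  shows "(\<Sum>q<9::nat. g (q div 3) (q mod 3) * (if \<alpha> = q div 3 then 1 else 0) * (if \<beta> = q mod 3 then 1 else 0)) = (g \<alpha> \<beta> :: complex)"
proof -
  have e: "{..<9::nat} = {0,1,2,3,4,5,6,7,8}" by auto
  have a: "\<alpha> = 0 \<or> \<alpha> = 1 \<or> \<alpha> = 2" and b: "\<beta> = 0 \<or> \<beta> = 1 \<or> \<beta> = 2" using assms by auto
  show ?thesis unfolding e using a b by auto
qed

definition cde :: "nat \<Rightarrow> nat \<Rightarrow> nat" where "cde \<rho> \<rho>' = (if \<rho> = \<rho>' then 0 else if \<rho> < \<rho>' then 1 else 2)"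
definition rp1 :: "nat \<Rightarrow> nat" where "rp1 \<alpha> = (if \<alpha> = 2 then 1 else 0)"
definition rp2 :: "nat \<Rightarrow> nat" where "rp2 \<alpha> = (if \<alpha> = 1 then 1 else 0)"
definition Xcoef :: "nat \<Rightarrow> nat \<Rightarrow> nat \<Rightarrow> nat \<Rightarrow> complex" where
  "Xcoef i j \<alpha> \<beta> = X2 i j (rp1 \<alpha>) (rp1 \<beta>) (rp2 \<alpha>) (rp2 \<beta>)"
definition Em :: "nat \<Rightarrow> nat \<Rightarrow> nat \<Rightarrow> nat \<Rightarrow> complex" where
  "Em n \<alpha> r r' = (if cls n r = cls n r' \<and> cde (pos n r) (pos n r') = \<alpha> then 1 else 0)"

lemma cde_lt: "cde \<rho> \<rho>' < 3" unfolding cde_def by auto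

lemma pos_lt: "pos n r < 2" unfolding pos_def by auto

lemma X2_toep:
  assumes "i < 2" "j < 2" "\<rho> < 2" "\<sigma> < 2" "\<rho>' < 2" "\<sigma>' < 2"
  shows "X2 i j \<rho> \<sigma> \<rho>' \<sigma>' = Xcoef i j (cde \<rho> \<rho>') (cde \<sigma> \<sigma>')"
  using lt2_cases[OF assms(1)] lt2_cases[OF assms(2)] lt2_cases[OF assms(3)] lt2_cases[OF assms(4)]
    lt2_cases[OF assms(5)] lt2_cases[OF assms(6)]
  unfolding Xcoef_def cde_def rp1_def rp2_def X2_def sum4 Vg_def
  by (elim disjE) simp_all

lemma cls_eq:
  assumes "2 \<le> n" "r < n" "r' < n"
  shows "cls n r = cls n r' \<longleftrightarrow> (r = r' \<or> (r = 0 \<and> r' = n - 1) \<or> (r = n - 1 \<and> r' = 0))"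
  using assms unfolding cls_def by auto

lemma cls_transfer:
  assumes n: "2 \<le> n" and b: "r < n" "r' < n" "t < n" "t' < n" and d: "int r - int r' = int t - int t'"
    and c: "cls n r = cls n r'"
  shows "cls n t = cls n t' \<and> cde (pos n r) (pos n r') = cde (pos n t) (pos n t')"
proof -
  from c have "r = r' \<or> (r = 0 \<and> r' = n - 1) \<or> (r = n - 1 \<and> r' = 0)" using cls_eq[OF n b(1,2)] by simp
  then show ?thesis
  proof (elim disjE)
    assume "r = r'" hence "t = t'" using d by simp
    thus ?thesis using \<open>r = r'\<close> by (simp add: cde_def)
  next
    assume h: "r = 0 \<and> r' = n - 1"
    hence "t = 0 \<and> t' = n - 1" using d b n by auto
    thus ?thesis using h n by (simp add: cls_def)
  next
    assume h: "r = n - 1 \<and> r' = 0"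
    hence "t = n - 1 \<and> t' = 0" using d b n by auto
    thus ?thesis using h n by (simp add: cls_def)
  qed
qed

lemma Em_toep:
  assumes n: "2 \<le> n"
  shows "toeplitz n (\<lambda>r r'. c * Em n \<alpha> r r')"
  unfolding toeplitz_def
proof (intro allI impI)
  fix r r' t t' assume h: "r < n \<and> r' < n \<and> t < n \<and> t' < n \<and> int r - int r' = int t - int t'"
  have "(cls n r = cls n r' \<and> cde (pos n r) (pos n r') = \<alpha>) \<longleftrightarrow> (cls n t = cls n t' \<and> cde (pos n t) (pos n t') = \<alpha>)"
    using cls_transfer[OF n, of r r' t t'] cls_transfer[OF n, of t t' r r'] h by auto
  thus "c * Em n \<alpha> r r' = c * Em n \<alpha> t t'" unfolding Em_def by simp
qed

lemma Xn_tensor: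
  assumes n: "2 \<le> n" and m: "2 \<le> m" and ij: "i < 2" "j < 2"
  shows "in_toep_tensor n m (Xn n m i j)"
  unfolding in_toep_tensor_def
proof (intro exI conjI allI impI)
  let ?A = "\<lambda>q r r'. Xcoef i j (q div 3) (q mod 3) * Em n (q div 3) r r'"
  let ?B = "\<lambda>q s s'. 1 * Em m (q mod 3) s s'"
  fix q :: nat assume "q < 9"
  show "toeplitz n (?A q)" by (rule Em_toep[OF n])
  show "toeplitz m (?B q)" by (rule Em_toep[OF m])
next
  fix r r' s s' assume r: "r < n" and r': "r' < n" and s: "s < m" and s': "s' < m"
  show "Xn n m i j (r, s) (r', s') = (\<Sum>q<9. Xcoef i j (q div 3) (q mod 3) * Em n (q div 3) r r' * (1 * Em m (q mod 3) s s'))"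
  proof (cases "cls n r = cls n r' \<and> cls m s = cls m s'")
    case True
    have "(\<Sum>q<9. Xcoef i j (q div 3) (q mod 3) * Em n (q div 3) r r' * (1 * Em m (q mod 3) s s')) =
          (\<Sum>q<9::nat. Xcoef i j (q div 3) (q mod 3) * (if cde (pos n r) (pos n r') = q div 3 then 1 else 0) *
              (if cde (pos m s) (pos m s') = q mod 3 then 1 else 0))"
      using True unfolding Em_def by simp
    also have "\<dots> = Xcoef i j (cde (pos n r) (pos n r')) (cde (pos m s) (pos m s'))"
      by (rule sum9[OF cde_lt cde_lt])
    also have "\<dots> = X2 i j (pos n r) (pos m s) (pos n r') (pos m s')"
      by (rule X2_toep[symmetric, OF ij pos_lt pos_lt pos_lt pos_lt])
    finally show ?thesis unfolding Xn_def using True by simp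
  next
    case False
    then show ?thesis unfolding Xn_def Em_def by auto
  qed
qed

theorem corollary6p6:
  fixes n m :: nat
  assumes "n \<ge> 2" and "m \<ge> 2"
  shows "\<exists>(p::nat) (X :: nat \<Rightarrow> nat \<Rightarrow> nat \<times> nat \<Rightarrow> nat \<times> nat \<Rightarrow> complex).
           in_Mp_tensor n m p X \<and> (min_pos n m p X \<noteq> max_pos n m p X)"
proof (intro exI conjI)
  show "in_Mp_tensor n m 2 (Xn n m)"
    unfolding in_Mp_tensor_def using Xn_tensor[OF assms] by blast
  have "min_pos n m 2 (Xn n m)" unfolding min_pos_def by (rule Xn_psd)
  thus "min_pos n m 2 (Xn n m) \<noteq> max_pos n m 2 (Xn n m)" using not_max[OF assms] by blast
qed


end
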